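(* For integers $n\ge1$ and $0\le t\le 3$, let $I_2(n;\xi^t)$ be the number of monic irreducible polynomials $f\in\mathbb{F}_2[x]$ of degree $n$ whose two leading coefficients $([x^{n-1}]f,[x^{n-2}]f)$ equal $(0,0),(1,0),(0,1),(1,1)$ for $t=0,1,2,3$ respectively. Then \begin{align*} I_2(n;\xi^t) &=\frac{[\![t=0]\!]}{n} \sum_{k\mid n}[\![4\mid k]\!]\, \mu(k)2^{n/k} +\frac{[\![2\mid t]\!]}{n} \sum_{k\mid n}[\![4\mid k-2]\!]\, \mu(k)2^{(n/k)-1}\\ &\quad+\frac{1}{n}\sum_{k\mid n}[\![4\mid k-1]\!]\, \mu(k)\left(2^{(n/k)-2}-(-1)^{n/k}2^{(n/2k)-1}\cos\left(\frac{(n/k)-2t}{4}\pi\right)\right)\\ &\quad+\frac{1}{n}\sum_{k\mid n}[\![4\mid k+1]\!]\, \mu(k)\left(2^{(n/k)-2}-(-1)^{n/k}2^{(n/2k)-1}\cos\left(\frac{(n/k)+2t}{4}\pi\right)\right), \end{align*} where the sums are over positive divisors $k$ of $n$.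
   Context: Coefficients $[x^{m}]f$ with $m<0$ are taken to be $0$ (so for $n=1$ the condition concerns only $[x^{0}]$ and $[x^{-1}]f=0$). The labeling corresponds to the class of $(x+1)^t$ in the group of polynomials modulo agreement of the two leading coefficients. $\mu$ is the Möbius function and $[\![P]\!]$ is $1$ if $P$ is true and $0$ otherwise. *)

theory Defs
  imports Complex_Main "HOL-Library.Z2" "HOL-Computational_Algebra.Polynomial"
    "HOL-Computational_Algebra.Squarefree" "HOL-Computational_Algebra.Primes"
begin

definition icoeff :: "'a::zero poly \<Rightarrow> int \<Rightarrow> 'a" where
  "icoeff f m = (if m < 0 then 0 else coeff f (nat m))"

definition moebius :: "nat \<Rightarrow> int" where
  "moebius k = (if squarefree k then (-1) ^ card (prime_factors k) else 0)"

definition iv :: "bool \<Rightarrow> real" where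
  "iv P = (if P then 1 else 0)"

definition I2 :: "nat \<Rightarrow> bit \<Rightarrow> bit \<Rightarrow> nat" where
  "I2 n a b = card {f :: bit poly. degree f = n \<and> lead_coeff f = 1 \<and> irreducible f
      \<and> icoeff f (int n - 1) = a \<and> icoeff f (int n - 2) = b}"

end

theory Submission imports Defs "HOL-Computational_Algebra.Computational_Algebra" "HOL-Computational_Algebra.Field_as_Ring" begin

instantiation bit ::
  "{unique_euclidean_ring, normalization_euclidean_semiring, normalization_semidom_multiplicative}"
begin
definition [simp]: "normalize_bit = (normalize_field :: bit \<Rightarrow> _)"
definition [simp]: "unit_factor_bit = (unit_factor_field :: bit \<Rightarrow> _)"
definition [simp]: "euclidean_size_bit = (euclidean_size_field :: bit \<Rightarrow> _)"
definition [simp]: "division_segment (x :: bit) = 1"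
instance
  by standard
    (auto simp add: dvd_field_iff field_split_simps split: if_splits)
end

instantiation bit :: euclidean_ring_gcd
begin
definition gcd_bit :: "bit \<Rightarrow> bit \<Rightarrow> bit" where
  "gcd_bit = Euclidean_Algorithm.gcd"
definition lcm_bit :: "bit \<Rightarrow> bit \<Rightarrow> bit" where
  "lcm_bit = Euclidean_Algorithm.lcm"
definition Gcd_bit :: "bit set \<Rightarrow> bit" where
 "Gcd_bit = Euclidean_Algorithm.Gcd"
definition Lcm_bit :: "bit set \<Rightarrow> bit" where
 "Lcm_bit = Euclidean_Algorithm.Lcm"
instance by standard (simp_all add: gcd_bit_def lcm_bit_def Gcd_bit_def Lcm_bit_def)
end
instance bit :: field_gcd ..

lemma bit_UNIV: "(UNIV :: bit set) = {0, 1}"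
  by (auto intro: bit.exhaust)

lemma lead_coeff_bit: "(p::bit poly) \<noteq> 0 \<Longrightarrow> lead_coeff p = 1"
  by (metis leading_coeff_0_iff bit_not_zero_iff)

lemma normalize_bitpoly [simp]: "normalize (p::bit poly) = p"
  by (cases "p = 0") (simp_all add: normalize_poly_def lead_coeff_bit one_pCons[symmetric])

lemma prime_bitpoly_iff: "prime (p::bit poly) \<longleftrightarrow> irreducible p"
  by (simp add: prime_def prime_elem_iff_irreducible)

lemma degree_eq_sum_factors:
  assumes "(f::bit poly) \<noteq> 0"
  shows "degree f = (\<Sum>P\<in>prime_factors f. multiplicity P f * degree P)"
proof -
  have "f = (\<Prod>p \<in> prime_factors f. p ^ multiplicity p f)"
    using prod_prime_factors[OF assms] by simp
  hence "degree f = degree (\<Prod>p \<in> prime_factors f. p ^ multiplicity p f)" by simp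
  also have "\<dots> = (\<Sum>p \<in> prime_factors f. degree (p ^ multiplicity p f))"
    by (rule degree_prod_sum_eq) auto
  also have "\<dots> = (\<Sum>P\<in>prime_factors f. multiplicity P f * degree P)"
    by (intro sum.cong refl) (auto simp add: degree_power_eq dest!: in_prime_factors_imp_prime)
  finally show ?thesis .
qed

definition Dset :: "bit poly \<Rightarrow> (bit poly \<times> nat) set" where
  "Dset f = {(P,k). irreducible P \<and> 1 \<le> k \<and> P ^ k dvd f}"

lemma Dset_eq:
  assumes "(f::bit poly) \<noteq> 0"
  shows "Dset f = Sigma (prime_factors f) (\<lambda>P. {1..multiplicity P f})"
proof safe
  fix P k assume "(P,k) \<in> Dset f"
  hence P: "irreducible P" "1 \<le> k" "P ^ k dvd f" by (auto simp: Dset_def)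
  hence "prime P" by (simp add: prime_bitpoly_iff)
  moreover have "P dvd f" using P dvd_power[of k P] dvd_trans by auto
  ultimately show "P \<in> prime_factors f" using assms by (auto simp: in_prime_factors_iff)
  show "k \<in> {1..multiplicity P f}"
    using P power_dvd_iff_le_multiplicity[OF assms, of P k] \<open>prime P\<close> by (auto simp: prime_def)
next
  fix P k assume "P \<in> prime_factors f" "k \<in> {1..multiplicity P f}"
  thus "(P,k) \<in> Dset f"
    using power_dvd_iff_le_multiplicity[OF assms, of P k]
    by (auto simp: Dset_def prime_bitpoly_iff[symmetric] prime_def in_prime_factors_iff)
qed

lemma finite_Dset: "(f::bit poly) \<noteq> 0 \<Longrightarrow> finite (Dset f)"
  by (simp add: Dset_eq)

lemma degree_eq_sum_Dset:
  assumes "(f::bit poly) \<noteq> 0"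
  shows "degree f = (\<Sum>(P,k)\<in>Dset f. degree P)"
  by (simp add: Dset_eq[OF assms] sum.Sigma[symmetric] degree_eq_sum_factors[OF assms])

lemma Poly_coeff_eq:
  assumes "degree (p::'a::zero poly) < n"
  shows "Poly (map (coeff p) [0..<n]) = p"
  by (rule poly_eqI) (use assms in \<open>auto simp: nth_default_def coeff_eq_0\<close>)

lemma deg_le_eq_image:
  "{p::bit poly. degree p < Suc n} = Poly ` {xs. set xs \<subseteq> UNIV \<and> length xs = Suc n}" (is "?A = ?B")
proof
  show "?A \<subseteq> ?B"
  proof
    fix p assume "p \<in> ?A"
    hence "p = Poly (map (coeff p) [0..<Suc n])" by (metis Poly_coeff_eq mem_Collect_eq)
    thus "p \<in> ?B" by auto
  qed
next
  show "?B \<subseteq> ?A"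
  proof
    fix p assume "p \<in> ?B"
    then obtain xs where xs: "length xs = Suc n" "p = Poly xs" by auto
    have "degree (Poly xs) \<le> n"
      by (rule degree_le) (use xs in \<open>auto simp: nth_default_def\<close>)
    hence "degree (Poly xs) < Suc n" by simp
    thus "p \<in> ?A" using xs by auto
  qed
qed

lemma inj_Poly_len: "inj_on Poly {xs::'a::zero list. set xs \<subseteq> UNIV \<and> length xs = n}"
proof (rule inj_onI)
  fix xs ys :: "'a list" assume A: "xs \<in> {xs. set xs \<subseteq> UNIV \<and> length xs = n}"
    "ys \<in> {xs. set xs \<subseteq> UNIV \<and> length xs = n}" "Poly xs = Poly ys"
  have "\<And>i. i < n \<Longrightarrow> xs ! i = ys ! i"
  proof -
    fix i assume "i < n"
    have "nth_default 0 xs i = nth_default 0 ys i" by (metis A(3) coeff_Poly_eq)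
    thus "xs ! i = ys ! i" using A \<open>i < n\<close> by (simp add: nth_default_def)
  qed
  thus "xs = ys" using A by (auto intro: nth_equalityI)
qed

lemma finite_deg_less: "finite {p::bit poly. degree p < Suc n}"
  unfolding deg_le_eq_image by (rule finite_imageI, rule finite_lists_length_eq) (simp add: bit_UNIV)

lemma card_bit_UNIV: "card (UNIV::bit set) = 2"
  by (simp add: bit_UNIV)

lemma card_deg_less: "card {p::bit poly. degree p < Suc n} = 2 ^ Suc n"
proof -
  have fin: "finite (UNIV::bit set)" by (simp add: bit_UNIV)
  show ?thesis unfolding deg_le_eq_image
    by (subst card_image[OF inj_Poly_len], subst card_lists_length_eq[OF fin]) (simp add: card_bit_UNIV)
qed

definition Mon :: "nat \<Rightarrow> bit poly set" where
  "Mon d = {f. degree f = d \<and> f \<noteq> 0}"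

definition Irr :: "nat \<Rightarrow> bit poly set" where
  "Irr d = {f. degree f = d \<and> irreducible f}"

lemma finite_Mon: "finite (Mon d)"
  by (rule finite_subset[OF _ finite_deg_less[of d]]) (auto simp: Mon_def)

lemma finite_Irr: "finite (Irr d)"
  by (rule finite_subset[OF _ finite_deg_less[of d]]) (auto simp: Irr_def)

lemma Irr_sub_Mon: "Irr d \<subseteq> Mon d"
  by (auto simp: Irr_def Mon_def)

lemma Mon_0: "Mon 0 = {1}"
proof -
  have "p = 1" if "degree p = 0" "(p::bit poly) \<noteq> 0" for p
  proof -
    have "lead_coeff p = 1" using that lead_coeff_bit by blast
    thus ?thesis using that by (metis degree_0_id one_pCons)
  qed
  thus ?thesis by (auto simp: Mon_def)
qed

lemma card_Mon: "card (Mon d) = 2 ^ d"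
proof (cases d)
  case 0 thus ?thesis by (simp add: Mon_0)
next
  case (Suc e)
  have "{p::bit poly. degree p < Suc d} = Mon d \<union> {p. degree p < Suc e}"
    using Suc by (auto simp: Mon_def)
  moreover have "Mon d \<inter> {p. degree p < Suc e} = {}" using Suc by (auto simp: Mon_def)
  ultimately have "card {p::bit poly. degree p < Suc d} = card (Mon d) + card {p::bit poly. degree p < Suc e}"
    by (simp add: card_Un_disjoint finite_Mon finite_deg_less)
  thus ?thesis using Suc by (simp add: card_deg_less)
qed

definition bv :: "bit \<Rightarrow> nat" where "bv b = (if b = 1 then 1 else 0)"

definition cl :: "bit poly \<Rightarrow> nat" where
  "cl f = bv (coeff (reflect_poly f) 1) + 2 * bv (coeff (reflect_poly f) 2)"

definition chi :: "nat \<Rightarrow> bit poly \<Rightarrow> complex" where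
  "chi j f = \<i> ^ (j * cl f)"

lemma i_pow4: "\<i> ^ 4 = 1"
  by (simp add: numeral_eq_Suc)

lemma i_pow_mod: "\<i> ^ n = \<i> ^ (n mod 4)"
proof -
  have "n = n mod 4 + 4 * (n div 4)" by simp
  hence "\<i> ^ n = \<i> ^ (n mod 4) * (\<i> ^ 4) ^ (n div 4)" by (metis power_add power_mult)
  thus ?thesis by (simp only: i_pow4 power_one mult_1_right)
qed

lemma cl_le: "cl f \<le> 3"
  by (simp add: cl_def bv_def)

lemma coeff_mult_1_gen:
  fixes p q :: "'a::comm_ring_1 poly"
  assumes "coeff p 0 = 1" "coeff q 0 = 1"
  shows "coeff (p*q) 1 = coeff p 1 + coeff q 1"
  using assms by (simp add: coeff_mult)

lemma coeff_mult_2_gen: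
  fixes p q :: "'a::comm_ring_1 poly"
  assumes "coeff p 0 = 1" "coeff q 0 = 1"
  shows "coeff (p*q) 2 = coeff p 2 + coeff p 1 * coeff q 1 + coeff q 2"
  using assms by (simp add: coeff_mult numeral_2_eq_2 atMost_Suc)

lemma coeff_reflect_mult1:
  assumes "(f::bit poly) \<noteq> 0" "g \<noteq> 0"
  shows "coeff (reflect_poly (f*g)) 1 = coeff (reflect_poly f) 1 + coeff (reflect_poly g) 1"
  unfolding reflect_poly_mult by (rule coeff_mult_1_gen) (simp_all add: lead_coeff_bit assms)

lemma coeff_reflect_mult2:
  assumes "(f::bit poly) \<noteq> 0" "g \<noteq> 0"
  shows "coeff (reflect_poly (f*g)) 2 = coeff (reflect_poly f) 2 + coeff (reflect_poly f) 1 * coeff (reflect_poly g) 1 + coeff (reflect_poly g) 2"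
  unfolding reflect_poly_mult by (rule coeff_mult_2_gen) (simp_all add: lead_coeff_bit assms)

lemma cl_mult:
  assumes "(f::bit poly) \<noteq> 0" "g \<noteq> 0"
  shows "cl (f*g) mod 4 = (cl f + cl g) mod 4"
  unfolding cl_def coeff_reflect_mult1[OF assms] coeff_reflect_mult2[OF assms]
  by (cases "coeff (reflect_poly f) 1"; cases "coeff (reflect_poly f) 2";
      cases "coeff (reflect_poly g) 1"; cases "coeff (reflect_poly g) 2") (simp_all add: bv_def)

lemma chi_mult:
  assumes "(f::bit poly) \<noteq> 0" "g \<noteq> 0"
  shows "chi j (f*g) = chi j f * chi j g"
proof -
  have "\<i> ^ (j * cl (f*g)) = \<i> ^ ((j * cl (f*g)) mod 4)" by (rule i_pow_mod)
  also have "(j * cl (f*g)) mod 4 = (j * (cl f + cl g)) mod 4"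
    by (metis cl_mult[OF assms] mod_mult_right_eq)
  also have "\<i> ^ \<dots> = \<i> ^ (j * (cl f + cl g))" by (rule i_pow_mod[symmetric])
  finally show ?thesis by (simp add: chi_def algebra_simps power_add)
qed

lemma chi_1 [simp]: "chi j 1 = 1"
  by (simp add: chi_def cl_def bv_def)

lemma chi_power:
  assumes "(P::bit poly) \<noteq> 0"
  shows "chi j (P ^ k) = chi j P ^ k"
  by (induction k) (simp_all add: chi_mult assms)

lemma chi_pow_idx: "chi j P ^ k = chi (j * k) P"
  by (simp add: chi_def power_mult[symmetric] mult_ac)

lemma chi_mod: "chi j P = chi (j mod 4) P"
proof -
  have "\<i> ^ (j * cl P) = \<i> ^ ((j * cl P) mod 4)" by (rule i_pow_mod)
  also have "(j * cl P) mod 4 = ((j mod 4) * cl P) mod 4" by (simp add: mod_mult_left_eq)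
  also have "\<i> ^ \<dots> = \<i> ^ ((j mod 4) * cl P)" by (rule i_pow_mod[symmetric])
  finally show ?thesis by (simp add: chi_def)
qed

definition S :: "nat \<Rightarrow> nat \<Rightarrow> complex" where
  "S j d = (\<Sum>f\<in>Mon d. chi j f)"

definition sig :: "nat \<Rightarrow> bit poly \<Rightarrow> bit poly" where
  "sig d f = f + monom 1 (d-1) + monom (coeff f (d-1)) (d-2)"

lemma sig_coeffs:
  assumes "d \<ge> 2"
  shows "coeff (sig d f) (d-1) = coeff f (d-1) + 1"
    "coeff (sig d f) (d-2) = coeff f (d-2) + coeff f (d-1)"
  using assms by (simp_all add: sig_def coeff_monom)

lemma sig_props:
  assumes "f \<in> Mon d" "d \<ge> 2"
  shows "sig d f \<in> Mon d" "chi j (sig d f) = \<i> ^ j * chi j f"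
proof -
  have df: "degree f = d" "f \<noteq> 0" using assms by (auto simp: Mon_def)
  have a: "degree (monom (1::bit) (d-1)) < d"
    using degree_monom_le[of "1::bit" "d-1"] assms(2) by linarith
  have b: "degree (monom (coeff f (d-1)) (d-2)) < d"
    using degree_monom_le[of "coeff f (d-1)" "d-2"] assms(2) by linarith
  have "degree (monom 1 (d-1) + monom (coeff f (d-1)) (d-2)) < d"
    by (rule degree_add_less[OF a b])
  hence dg: "degree (sig d f) = d"
    unfolding sig_def add.assoc using df by (subst degree_add_eq_left) auto
  thus "sig d f \<in> Mon d" using assms by (auto simp: Mon_def)
  have r1: "coeff (reflect_poly (sig d f)) 1 = coeff f (d-1) + 1"
    using dg sig_coeffs(1)[OF assms(2)] assms(2) by (simp add: coeff_reflect_poly)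
  have r2: "coeff (reflect_poly (sig d f)) 2 = coeff f (d-2) + coeff f (d-1)"
    using dg sig_coeffs(2)[OF assms(2)] assms(2) by (simp add: coeff_reflect_poly)
  have r1': "coeff (reflect_poly f) 1 = coeff f (d-1)" using df assms(2) by (simp add: coeff_reflect_poly)
  have r2': "coeff (reflect_poly f) 2 = coeff f (d-2)" using df assms(2) by (simp add: coeff_reflect_poly)
  have "cl (sig d f) mod 4 = (cl f + 1) mod 4"
    unfolding cl_def r1 r2 r1' r2'
    by (cases "coeff f (d-1)"; cases "coeff f (d-2)") (simp_all add: bv_def)
  hence "(j * cl (sig d f)) mod 4 = (j * cl f + j) mod 4"
    by (metis mod_mult_right_eq distrib_left mult_1_right)
  hence "\<i> ^ (j * cl (sig d f)) = \<i> ^ (j * cl f + j)" by (metis i_pow_mod)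
  thus "chi j (sig d f) = \<i> ^ j * chi j f" by (simp add: chi_def power_add)
qed

lemma sig_inj: 
  assumes "d \<ge> 2"
  shows "inj_on (sig d) (Mon d)"
proof (rule inj_onI)
  fix f g assume A: "f \<in> Mon d" "g \<in> Mon d" "sig d f = sig d g"
  have "coeff f (d-1) + 1 = coeff g (d-1) + 1" using A(3) sig_coeffs(1)[OF assms] by metis
  hence e: "coeff f (d-1) = coeff g (d-1)" by (metis add_right_cancel)
  have "f + (monom 1 (d-1) + monom (coeff f (d-1)) (d-2)) = g + (monom 1 (d-1) + monom (coeff f (d-1)) (d-2))"
    using A(3) e by (simp only: sig_def add.assoc)
  thus "f = g" by (metis add_right_cancel)
qed

lemma i_pow_ne1: "\<not> 4 dvd j \<Longrightarrow> \<i> ^ j \<noteq> 1"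
proof -
  assume "\<not> 4 dvd j"
  hence "j mod 4 = 1 \<or> j mod 4 = 2 \<or> j mod 4 = 3" by presburger
  moreover have "\<i> ^ 1 \<noteq> 1" "\<i> ^ 2 \<noteq> 1" "\<i> ^ 3 \<noteq> 1"
    by (simp_all add: power3_eq_cube complex_eq_iff)
  ultimately show ?thesis by (subst i_pow_mod) auto
qed

lemma S_ge2:
  assumes "d \<ge> 2" "\<not> 4 dvd j"
  shows "S j d = 0"
proof -
  have img: "sig d ` Mon d = Mon d"
    by (rule endo_inj_surj[OF finite_Mon]) (use sig_props(1)[OF _ assms(1)] sig_inj[OF assms(1)] in auto)
  have "S j d = (\<Sum>f\<in>sig d ` Mon d. chi j f)" by (simp add: S_def img)
  also have "\<dots> = (\<Sum>f\<in>Mon d. chi j (sig d f))" by (simp add: sum.reindex[OF sig_inj[OF assms(1)]])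
  also have "\<dots> = \<i> ^ j * S j d" using sig_props(2)[OF _ assms(1)]
    by (simp add: S_def sum_distrib_left)
  finally have "(1 - \<i> ^ j) * S j d = 0" by (simp add: algebra_simps)
  thus ?thesis using i_pow_ne1[OF assms(2)] by simp
qed

lemma S_0: "S j 0 = 1"
  by (simp add: S_def Mon_0)

lemma Mon_1: "Mon 1 = {[:0,1:], [:1,1:]}"
proof (rule set_eqI)
  fix p :: "bit poly"
  have "p \<in> Mon 1 \<Longrightarrow> p = [:0,1:] \<or> p = [:1,1:]"
  proof -
    assume "p \<in> Mon 1"
    hence d: "degree p = 1" "p \<noteq> 0" by (auto simp: Mon_def)
    have e: "p = [:coeff p 0, coeff p 1:]" by (rule degree1_coeffs[OF d(1)]) simp
    have "coeff p 1 = 1" using lead_coeff_bit[OF d(2)] d(1) by simp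
    hence "p = [:coeff p 0, 1:]" using e by simp
    thus ?thesis by (cases "coeff p 0") simp_all
  qed
  moreover have "p = [:0,1:] \<or> p = [:1,1:] \<Longrightarrow> p \<in> Mon 1"
    by (auto simp: Mon_def)
  ultimately show "p \<in> Mon 1 \<longleftrightarrow> p \<in> {[:0,1:], [:1,1:]}" by blast
qed

lemma cl_X: "cl [:0,1:] = 0"
  by (simp add: cl_def coeff_reflect_poly bv_def)

lemma cl_X1: "cl [:1,1:] = 1"
  by (simp add: cl_def coeff_reflect_poly bv_def)

lemma S_1: "S j 1 = 1 + \<i> ^ j"
proof -
  have "[:0,1:] \<noteq> ([:1,1:] :: bit poly)" by simp
  thus ?thesis unfolding S_def Mon_1 by (simp add: chi_def cl_X cl_X1)
qed

lemma S_triv: "4 dvd j \<Longrightarrow> S j d = 2 ^ d"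
proof -
  assume "4 dvd j"
  hence "chi j f = 1" for f using chi_mod[of j f] by (simp add: chi_def)
  thus ?thesis by (simp add: S_def card_Mon)
qed

lemma irreducible_degree_pos: "irreducible (P::bit poly) \<Longrightarrow> degree P \<ge> 1"
proof (rule ccontr)
  assume "irreducible P" "\<not> degree P \<ge> 1"
  hence "P \<noteq> 0" "degree P = 0" by auto
  hence "is_unit P" by (simp add: is_unit_iff_degree)
  thus False using \<open>irreducible P\<close> by (simp add: irreducible_def)
qed

definition PK :: "nat \<Rightarrow> (bit poly \<times> nat) set" where
  "PK m = {(P,k). irreducible P \<and> 1 \<le> k \<and> k * degree P = m}"

definition Aset :: "nat \<Rightarrow> (bit poly \<times> nat) set" where
  "Aset d = {(P,k). irreducible P \<and> 1 \<le> k \<and> k * degree P \<le> d}"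

lemma finite_Aset: "finite (Aset d)"
proof (rule finite_subset)
  show "Aset d \<subseteq> {P. degree P < Suc d} \<times> {..d}"
  proof safe
    fix P k assume "(P,k) \<in> Aset d"
    hence A: "irreducible P" "1 \<le> k" "k * degree P \<le> d" by (auto simp: Aset_def)
    have "degree P \<ge> 1" using irreducible_degree_pos[OF A(1)] .
    have "degree P \<le> k * degree P" using A(2) by simp
    thus "degree P < Suc d" using A(3) by linarith
    have "k \<le> k * degree P" using \<open>degree P \<ge> 1\<close> by (metis mult_le_mono2 mult_1_right)
    thus "k \<le> d" using A(3) by linarith
  qed
qed (simp add: finite_deg_less)

lemma finite_PK: "finite (PK m)"
  by (rule finite_subset[OF _ finite_Aset[of m]]) (auto simp: PK_def Aset_def)

definition psi :: "nat \<Rightarrow> nat \<Rightarrow> complex" where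
  "psi j m = (\<Sum>(P,k)\<in>PK m. of_nat (degree P) * chi j P ^ k)"

lemma dvd_image:
  assumes "irreducible (P::bit poly)" "1 \<le> k" "k * degree P \<le> d"
  shows "{f\<in>Mon d. P ^ k dvd f} = (\<lambda>g. P ^ k * g) ` Mon (d - k * degree P)"
proof safe
  have P0: "P \<noteq> 0" using assms(1) by auto
  fix f assume f: "f \<in> Mon d" "P ^ k dvd f"
  then obtain g where g: "f = P ^ k * g" by (auto elim: dvdE)
  have "g \<noteq> 0" using g f(1) by (auto simp: Mon_def)
  hence "degree f = k * degree P + degree g" using g P0 by (simp add: degree_mult_eq degree_power_eq)
  hence "g \<in> Mon (d - k * degree P)" using f(1) \<open>g \<noteq> 0\<close> by (auto simp: Mon_def)
  thus "f \<in> (\<lambda>g. P ^ k * g) ` Mon (d - k * degree P)" using g by auto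
next
  have P0: "P \<noteq> 0" using assms(1) by auto
  fix g assume g: "g \<in> Mon (d - k * degree P)"
  hence "g \<noteq> 0" "degree g = d - k * degree P" by (auto simp: Mon_def)
  hence "degree (P ^ k * g) = d" using P0 assms(3) by (simp add: degree_mult_eq degree_power_eq)
  thus "P ^ k * g \<in> Mon d" using P0 \<open>g \<noteq> 0\<close> by (auto simp: Mon_def)
qed simp

lemma count_identity:
  "of_nat d * S j d = (\<Sum>m\<in>{1..d}. psi j m * S j (d - m))"
proof -
  define F where "F = (\<lambda>x::bit poly \<times> nat. of_nat (degree (fst x)) * chi j (fst x) ^ snd x * S j (d - snd x * degree (fst x)))"
  have "of_nat d * S j d = (\<Sum>f\<in>Mon d. of_nat (degree f) * chi j f)"
    by (simp add: S_def sum_distrib_left Mon_def)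
  also have "\<dots> = (\<Sum>f\<in>Mon d. \<Sum>x\<in>{x\<in>Aset d. fst x ^ snd x dvd f}. of_nat (degree (fst x)) * chi j f)"
  proof (intro sum.cong refl)
    fix f assume f: "f \<in> Mon d"
    hence f0: "f \<noteq> 0" by (simp add: Mon_def)
    have eq: "{x\<in>Aset d. fst x ^ snd x dvd f} = Dset f"
    proof safe
      fix P k assume "(P,k) \<in> Dset f"
      hence A: "irreducible P" "1 \<le> k" "P ^ k dvd f" by (auto simp: Dset_def)
      have P0: "P \<noteq> 0" using A(1) by auto
      hence "degree (P ^ k) \<le> degree f" using A(3) f0 by (simp add: dvd_imp_degree_le)
      hence "k * degree P \<le> d" using f P0 by (simp add: degree_power_eq Mon_def)
      thus "(P,k) \<in> Aset d" using A by (simp add: Aset_def)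
    qed (auto simp: Aset_def Dset_def)
    have "of_nat (degree f) * chi j f = (\<Sum>x\<in>Dset f. of_nat (degree (fst x))) * chi j f"
      by (simp add: degree_eq_sum_Dset[OF f0] case_prod_beta)
    thus "of_nat (degree f) * chi j f = (\<Sum>x\<in>{x\<in>Aset d. fst x ^ snd x dvd f}. of_nat (degree (fst x)) * chi j f)"
      by (simp add: eq sum_distrib_right)
  qed
  also have "\<dots> = (\<Sum>x\<in>Aset d. \<Sum>f\<in>{f\<in>Mon d. fst x ^ snd x dvd f}. of_nat (degree (fst x)) * chi j f)"
    by (rule sum.swap_restrict[OF finite_Mon finite_Aset])
  also have "\<dots> = (\<Sum>x\<in>Aset d. F x)"
  proof (intro sum.cong refl)
    fix x assume x: "x \<in> Aset d"
    obtain P k where xe: "x = (P,k)" by force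
    have A: "irreducible P" "1 \<le> k" "k * degree P \<le> d" using x xe by (auto simp: Aset_def)
    have P0: "P \<noteq> 0" using A(1) by auto
    have inj: "inj_on (\<lambda>g. P ^ k * g) (Mon (d - k * degree P))"
      by (rule inj_onI) (use P0 in simp)
    have "(\<Sum>f\<in>{f\<in>Mon d. P ^ k dvd f}. of_nat (degree P) * chi j f)
        = (\<Sum>g\<in>Mon (d - k * degree P). of_nat (degree P) * chi j (P ^ k * g))"
      unfolding dvd_image[OF A] by (simp add: sum.reindex[OF inj])
    also have "\<dots> = (\<Sum>g\<in>Mon (d - k * degree P). of_nat (degree P) * chi j P ^ k * chi j g)"
      by (intro sum.cong refl) (auto simp: chi_mult chi_power P0 Mon_def)
    also have "\<dots> = F x" by (simp add: F_def xe S_def sum_distrib_left mult.assoc)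
    finally show "(\<Sum>f\<in>{f\<in>Mon d. fst x ^ snd x dvd f}. of_nat (degree (fst x)) * chi j f) = F x"
      by (simp add: xe)
  qed
  also have "\<dots> = (\<Sum>m\<in>{1..d}. \<Sum>x\<in>{x\<in>Aset d. snd x * degree (fst x) = m}. F x)"
  proof (rule sum.group[symmetric, OF finite_Aset finite_atLeastAtMost])
    show "(\<lambda>x. snd x * degree (fst x)) ` Aset d \<subseteq> {1..d}"
    proof safe
      fix P k assume "(P,k) \<in> Aset d"
      hence A: "irreducible P" "1 \<le> k" "k * degree P \<le> d" by (auto simp: Aset_def)
      have "degree P \<ge> 1" using irreducible_degree_pos[OF A(1)] .
      thus "snd (P, k) * degree (fst (P, k)) \<in> {1..d}" using A by (simp add: one_le_mult_iff)
    qed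
  qed
  also have "\<dots> = (\<Sum>m\<in>{1..d}. psi j m * S j (d - m))"
  proof (intro sum.cong refl)
    fix m assume m: "m \<in> {1..d}"
    have eq: "{x\<in>Aset d. snd x * degree (fst x) = m} = PK m"
      using m by (auto simp: Aset_def PK_def)
    show "(\<Sum>x\<in>{x\<in>Aset d. snd x * degree (fst x) = m}. F x) = psi j m * S j (d - m)"
      unfolding eq psi_def sum_distrib_right
      by (intro sum.cong refl) (auto simp: F_def PK_def)
  qed
  finally show ?thesis .
qed

lemma psi_nontriv:
  assumes "\<not> 4 dvd j" "m \<ge> 1"
  shows "psi j m = - ((- (1 + \<i> ^ j)) ^ m)"
  using assms(2)
proof (induction m rule: dec_induct)
  case base
  have "of_nat 1 * S j 1 = (\<Sum>m\<in>{1..1}. psi j m * S j (1 - m))" by (rule count_identity)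
  thus ?case using S_1[of j] by (simp add: S_0)
next
  case (step d)
  let ?a = "1 + \<i> ^ j"
  have d2: "Suc d \<ge> 2" using step by simp
  have "of_nat (Suc d) * S j (Suc d) = (\<Sum>m\<in>{1..Suc d}. psi j m * S j (Suc d - m))" by (rule count_identity)
  hence "0 = (\<Sum>m\<in>{1..Suc d}. psi j m * S j (Suc d - m))" using S_ge2[OF d2 assms(1)] by simp
  also have "\<dots> = (\<Sum>m\<in>{d, Suc d}. psi j m * S j (Suc d - m))"
  proof (rule sum.mono_neutral_right)
    show "{d, Suc d} \<subseteq> {1..Suc d}" using step by auto
    show "\<forall>i\<in>{1..Suc d} - {d, Suc d}. psi j i * S j (Suc d - i) = 0"
    proof
      fix i assume "i \<in> {1..Suc d} - {d, Suc d}"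
      hence "Suc d - i \<ge> 2" by auto
      thus "psi j i * S j (Suc d - i) = 0" using S_ge2[OF _ assms(1)] by simp
    qed
  qed simp
  also have "\<dots> = psi j d * ?a + psi j (Suc d)" using S_1[of j] by (simp add: S_0 Suc_diff_le)
  finally have "psi j (Suc d) = - ?a * psi j d" by (simp add: algebra_simps eq_neg_iff_add_eq_0)
  also have "\<dots> = - ((- ?a) ^ Suc d)" using step.IH by simp
  finally show ?case .
qed

lemma psi_triv:
  assumes "4 dvd j" "m \<ge> 1"
  shows "psi j m = 2 ^ m"
  using assms(2)
proof (induction m rule: less_induct)
  case (less m)
  have "of_nat m * S j m = (\<Sum>k\<in>{1..m}. psi j k * S j (m - k))" by (rule count_identity)
  also have "{1..m} = insert m {1..<m}" using less.prems by auto
  also have "(\<Sum>k\<in>insert m {1..<m}. psi j k * S j (m - k)) = psi j m + (\<Sum>k\<in>{1..<m}. psi j k * S j (m - k))"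
    by (simp add: S_triv[OF assms(1)])
  also have "(\<Sum>k\<in>{1..<m}. psi j k * S j (m - k)) = (\<Sum>k\<in>{1..<m}. 2 ^ m)"
  proof (intro sum.cong refl)
    fix k assume k: "k \<in> {1..<m}"
    hence "psi j k = 2 ^ k" using less.IH by auto
    thus "psi j k * S j (m - k) = 2 ^ m" using k by (simp add: S_triv[OF assms(1)] power_add[symmetric])
  qed
  finally have "of_nat m * 2 ^ m = psi j m + of_nat (m - 1) * (2::complex) ^ m" by (simp add: S_triv[OF assms(1)])
  moreover have "of_nat m = of_nat (m - 1) + (1::complex)" using less.prems by (simp add: of_nat_diff)
  ultimately show ?case by (simp add: algebra_simps)
qed

definition G :: "nat \<Rightarrow> nat \<Rightarrow> complex" where
  "G j e = (\<Sum>P\<in>Irr e. chi j P)"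

lemma psi_divisors:
  assumes "m \<ge> 1"
  shows "psi j m = (\<Sum>e\<in>{e. e dvd m}. of_nat e * G (j * (m div e)) e)"
proof -
  have fD: "finite {e. e dvd m}" using assms by simp
  have "psi j m = (\<Sum>(e,P)\<in>Sigma {e. e dvd m} Irr. of_nat e * chi j P ^ (m div e))"
    unfolding psi_def
  proof (rule sum.reindex_bij_witness[where i = "\<lambda>(e,P). (P, m div e)" and j = "\<lambda>(P,k). (degree P, P)"])
    fix a assume "a \<in> PK m"
    then obtain P k where a: "a = (P,k)" "irreducible P" "1 \<le> k" "k * degree P = m" by (auto simp: PK_def)
    have "degree P \<ge> 1" using irreducible_degree_pos[OF a(2)] .
    hence mk: "m div degree P = k" using a(4) by auto
    show "(case (case a of (P, k) \<Rightarrow> (degree P, P)) of (e, P) \<Rightarrow> (P, m div e)) = a"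
      using a mk by simp
    show "(case a of (P, k) \<Rightarrow> (degree P, P)) \<in> Sigma {e. e dvd m} Irr"
      using a by (auto simp: Irr_def)
    show "(case (case a of (P, k) \<Rightarrow> (degree P, P)) of (x, xa) \<Rightarrow> of_nat x * chi j xa ^ (m div x)) =
          (case a of (P, k) \<Rightarrow> of_nat (degree P) * chi j P ^ k)"
      using a mk by simp
  next
    fix b assume "b \<in> Sigma {e. e dvd m} Irr"
    then obtain e P where b: "b = (e,P)" "e dvd m" "P \<in> Irr e" by auto
    have deg: "degree P = e" "irreducible P" using b by (auto simp: Irr_def)
    have "e \<ge> 1" using irreducible_degree_pos[OF deg(2)] deg(1) by simp
    show "(case (case b of (e, P) \<Rightarrow> (P, m div e)) of (P, k) \<Rightarrow> (degree P, P)) = b"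
      using b deg by simp
    have "e \<le> m" using b(2) assms by (intro dvd_imp_le) auto
    hence "0 < m div e" using \<open>e \<ge> 1\<close> by (simp add: div_greater_zero_iff)
    hence "m div e \<ge> 1" by simp
    moreover have "(m div e) * e = m" using b(2) by simp
    ultimately show "(case b of (e, P) \<Rightarrow> (P, m div e)) \<in> PK m"
      using b deg by (simp add: PK_def)
  qed
  also have "\<dots> = (\<Sum>e\<in>{e. e dvd m}. \<Sum>P\<in>Irr e. of_nat e * chi j P ^ (m div e))"
    by (subst sum.Sigma[OF fD]) (auto simp: finite_Irr)
  also have "\<dots> = (\<Sum>e\<in>{e. e dvd m}. of_nat e * G (j * (m div e)) e)"
    by (simp add: G_def sum_distrib_left chi_pow_idx)
  finally show ?thesis .
qed

lemma prime_factors_prod_primes: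
  assumes "finite T" "\<And>p. p \<in> T \<Longrightarrow> prime (p::nat)"
  shows "prime_factors (\<Prod>T) = T"
proof -
  have "\<Prod>T \<noteq> 0" using assms by (metis prod_zero_iff not_prime_0)
  show ?thesis
  proof safe
    fix p assume "p \<in> prime_factors (\<Prod>T)"
    hence p: "prime p" "p dvd \<Prod>T" by auto
    then obtain q where "q \<in> T" "p dvd q" using prime_dvd_prod_iff[OF assms(1) p(1)] by auto
    thus "p \<in> T" using p assms(2) primes_dvd_imp_eq by metis
  next
    fix p assume "p \<in> T"
    thus "p \<in> prime_factors (\<Prod>T)" using assms \<open>\<Prod>T \<noteq> 0\<close>
      by (auto simp: in_prime_factors_iff dvd_prodI)
  qed
qed

lemma squarefree_prod_primes:
  assumes "finite T" "\<And>p. p \<in> T \<Longrightarrow> prime (p::nat)"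
  shows "squarefree (\<Prod>T)"
  by (rule squarefree_prod_coprime) (auto intro: primes_coprime squarefree_prime assms)

lemma squarefree_prod_pf:
  assumes "squarefree (k::nat)" "k > 0"
  shows "\<Prod>(prime_factors k) = k"
proof -
  have "(\<Prod>p \<in> prime_factors k. p ^ multiplicity p k) = k"
    using prod_prime_factors[of k] assms by simp
  moreover have "multiplicity p k = 1" if "p \<in> prime_factors k" for p
    using squarefree_factorial_semiring'[of k] assms that by auto
  ultimately show ?thesis by simp
qed

lemma sum_Pow_alt: "finite (A::'a set) \<Longrightarrow> (\<Sum>X\<in>Pow A. (-1::int) ^ card X) = (if A = {} then 1 else 0)"
proof -
  assume fA: "finite A"
  have "(\<Prod>x\<in>A. (1::int) - 1) = (\<Sum>X\<in>Pow A. (- 1) ^ card X * prod (\<lambda>_. 1) X * prod (\<lambda>_. 1) (A - X))"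
    by (rule prod_diff_conv_sum[OF fA])
  hence e: "(\<Sum>X\<in>Pow A. (-1::int) ^ card X) = 0 ^ card A" by simp
  show ?thesis
  proof (cases "A = {}")
    case False
    hence "card A > 0" using fA by (simp add: card_gt_0_iff)
    thus ?thesis using e False by simp
  qed simp
qed

lemma mu_sum:
  assumes "n \<ge> 1"
  shows "(\<Sum>k\<in>{k. k dvd n}. moebius k) = (if n = 1 then 1 else 0)"
proof -
  let ?P = "prime_factors n"
  have fD: "finite {k. k dvd n}" using assms by simp
  have "(\<Sum>k\<in>{k. k dvd n}. moebius k) = (\<Sum>k\<in>{k. k dvd n \<and> squarefree k}. moebius k)"
    by (rule sum.mono_neutral_right[OF fD]) (auto simp: moebius_def)
  also have "\<dots> = (\<Sum>k\<in>{k. k dvd n \<and> squarefree k}. (-1) ^ card (prime_factors k))"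
    by (simp add: moebius_def)
  also have "\<dots> = (\<Sum>T\<in>Pow ?P. (-1) ^ card T)"
  proof (rule sum.reindex_bij_witness[where i = "\<lambda>T. \<Prod>T" and j = "prime_factors"])
    fix k assume k: "k \<in> {k. k dvd n \<and> squarefree k}"
    hence "k > 0" using assms by (auto intro: Nat.gr0I)
    thus "\<Prod>(prime_factors k) = k" using k squarefree_prod_pf by auto
    show "prime_factors k \<in> Pow ?P" using k \<open>k > 0\<close> assms
      by (auto simp: in_prime_factors_iff intro: dvd_trans)
    show "(-1) ^ card (prime_factors k) = (-1) ^ card (prime_factors k)" ..
  next
    fix T assume T: "T \<in> Pow ?P"
    hence fS: "finite T" and pS: "\<And>p. p \<in> T \<Longrightarrow> prime p"
      using finite_subset[of T ?P] by auto
    show "prime_factors (\<Prod>T) = T" by (rule prime_factors_prod_primes[OF fS pS])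
    have "\<Prod>T dvd (\<Prod>p\<in>?P. p ^ multiplicity p n)"
    proof (rule prod_dvd_prod_subset2)
      show "T \<subseteq> ?P" using T by auto
      fix p assume "p \<in> T"
      hence "multiplicity p n > 0" using T by (auto simp: prime_factors_multiplicity)
      thus "p dvd p ^ multiplicity p n" by simp
    qed simp
    also have "\<dots> = n" using prod_prime_factors[of n] assms by simp
    finally have "\<Prod>T dvd n" .
    thus "\<Prod>T \<in> {k. k dvd n \<and> squarefree k}" using squarefree_prod_primes[OF fS pS] by simp
  qed
  also have "\<dots> = (if ?P = {} then 1 else 0)" by (rule sum_Pow_alt) simp
  also have "(?P = {}) = (n = 1)"
    using assms prime_factorization_empty_iff[of n] by auto
  finally show ?thesis .
qed

lemma divisor_arith:
  assumes "n \<ge> (1::nat)" "k dvd n"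
  shows "e dvd n div k \<longleftrightarrow> e dvd n \<and> k * e dvd n"
    and "e dvd n div k \<Longrightarrow> k * (n div k div e) = n div e"
proof -
  obtain a where a: "n = k * a" using assms(2) by (auto elim: dvdE)
  have k0: "k > 0" using a assms(1) by (cases k) auto
  have na: "n div k = a" using a k0 by simp
  show "e dvd n div k \<longleftrightarrow> e dvd n \<and> k * e dvd n"
  proof -
    have "k \<noteq> 0" using k0 by simp
    thus ?thesis unfolding na a by auto
  qed
  assume "e dvd n div k"
  then obtain b where b: "a = e * b" using na by (auto elim: dvdE)
  have e0: "e > 0" using a b assms(1) by (cases e) auto
  show "k * (n div k div e) = n div e"
    unfolding na using b e0 a by simp
qed

lemma inversion:
  assumes "n \<ge> 1"
  shows "(\<Sum>k\<in>{k. k dvd n}. of_int (moebius k) * psi (j*k) (n div k)) = of_nat n * G j n"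
proof -
  let ?D = "{k. k dvd n}"
  have fD: "finite ?D" using assms by simp
  have "(\<Sum>k\<in>?D. of_int (moebius k) * psi (j*k) (n div k))
      = (\<Sum>k\<in>?D. \<Sum>e\<in>{e\<in>?D. k * e dvd n}. of_int (moebius k) * (of_nat e * G (j * (n div e)) e))"
  proof (intro sum.cong refl)
    fix k assume k: "k \<in> ?D"
    have "n div k \<ge> 1" using k assms
      by (metis One_nat_def Suc_leI div_greater_zero_iff dvd_imp_le mem_Collect_eq not_one_le_zero neq0_conv dvd_0_left_iff)
    hence "psi (j*k) (n div k) = (\<Sum>e\<in>{e. e dvd n div k}. of_nat e * G (j * k * (n div k div e)) e)"
      by (rule psi_divisors)
    also have "\<dots> = (\<Sum>e\<in>{e\<in>?D. k * e dvd n}. of_nat e * G (j * (n div e)) e)"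
    proof (rule sum.cong)
      show "{e. e dvd n div k} = {e\<in>?D. k * e dvd n}" using divisor_arith(1)[OF assms] k by auto
      fix e assume "e \<in> {e\<in>?D. k * e dvd n}"
      hence "e dvd n div k" using divisor_arith(1)[OF assms] k by auto
      hence "k * (n div k div e) = n div e" using divisor_arith(2)[OF assms] k by auto
      thus "of_nat e * G (j * k * (n div k div e)) e = of_nat e * G (j * (n div e)) e"
        by (simp add: mult.assoc)
    qed
    finally show "of_int (moebius k) * psi (j*k) (n div k) = (\<Sum>e\<in>{e\<in>?D. k * e dvd n}. of_int (moebius k) * (of_nat e * G (j * (n div e)) e))"
      by (simp add: sum_distrib_left)
  qed
  also have "\<dots> = (\<Sum>e\<in>?D. \<Sum>k\<in>{k\<in>?D. k * e dvd n}. of_int (moebius k) * (of_nat e * G (j * (n div e)) e))"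
    by (rule sum.swap_restrict[OF fD fD])
  also have "\<dots> = (\<Sum>e\<in>?D. (if e = n then of_nat e * G (j * (n div e)) e else 0))"
  proof (intro sum.cong refl)
    fix e assume e: "e \<in> ?D"
    have ne: "n div e \<ge> 1" using e assms
      by (metis One_nat_def Suc_leI div_greater_zero_iff dvd_imp_le mem_Collect_eq not_one_le_zero neq0_conv dvd_0_left_iff)
    have "{k\<in>?D. k * e dvd n} = {k. k dvd n div e}"
      using divisor_arith(1)[OF assms, of e] e by (auto simp: mult.commute)
    hence "(\<Sum>k\<in>{k\<in>?D. k * e dvd n}. of_int (moebius k) * (of_nat e * G (j * (n div e)) e))
        = of_int (\<Sum>k\<in>{k. k dvd n div e}. moebius k) * (of_nat e * G (j * (n div e)) e)"
      by (simp add: sum_distrib_right)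
    also have "\<dots> = (if n div e = 1 then of_nat e * G (j * (n div e)) e else 0)"
      by (simp add: mu_sum[OF ne])
    also have "(n div e = 1) = (e = n)" using e assms
      by (metis div_self dvd_mult_div_cancel mem_Collect_eq mult.right_neutral not_one_le_zero)
    finally show "(\<Sum>k\<in>{k\<in>?D. k * e dvd n}. of_int (moebius k) * (of_nat e * G (j * (n div e)) e))
        = (if e = n then of_nat e * G (j * (n div e)) e else 0)" .
  qed
  also have "\<dots> = of_nat n * G j n" using fD assms by (simp add: sum.delta')
  finally show ?thesis .
qed

lemma i_cube: "\<i> ^ 3 = - \<i>"
  by (simp add: power3_eq_cube)

lemma sum4: "(\<Sum>j<4. (w::complex) ^ j) = 1 + w + w^2 + w^3"
proof -
  have "{..<4::nat} = {0,1,2,3}" by auto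
  thus ?thesis by (simp add: add.assoc)
qed

lemma sum_i_pow: "(\<Sum>j<4. \<i> ^ (j * x)) = (if 4 dvd x then 4 else (0::complex))"
proof -
  have "(\<Sum>j<4. \<i> ^ (j * x)) = (\<Sum>j<4. (\<i> ^ (x mod 4)) ^ j)"
    by (intro sum.cong refl) (metis i_pow_mod power_mult mult.commute)
  also have "\<dots> = 1 + \<i> ^ (x mod 4) + (\<i> ^ (x mod 4))^2 + (\<i> ^ (x mod 4))^3"
    by (rule sum4)
  also have "\<dots> = (if 4 dvd x then 4 else (0::complex))"
  proof -
    have "x mod 4 = 0 \<or> x mod 4 = 1 \<or> x mod 4 = 2 \<or> x mod 4 = 3" by presburger
    moreover have "4 dvd x \<longleftrightarrow> x mod 4 = 0" by presburger
    moreover have "(\<i>^2)^2 = (1::complex)" "(\<i>^2)^3 = (-1::complex)" "(\<i>^3)^2 = (-1::complex)" "(\<i>^3)^3 = \<i>"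
      by (simp_all add: i_cube)
    ultimately show ?thesis
      by (elim disjE) (simp_all add: i_cube)
  qed
  finally show ?thesis .
qed

lemma orth:
  assumes "t \<le> 3"
  shows "of_nat (4 * card {P\<in>Irr n. cl P = t}) = (\<Sum>j<4. \<i> ^ (j * (4 - t)) * G j n)"
proof -
  have "(\<Sum>j<4. \<i> ^ (j * (4 - t)) * G j n) = (\<Sum>j<4. \<Sum>P\<in>Irr n. \<i> ^ (j * (4 - t)) * chi j P)"
    by (simp only: G_def sum_distrib_left)
  also have "\<dots> = (\<Sum>P\<in>Irr n. \<Sum>j<4. \<i> ^ (j * (4 - t)) * chi j P)"
    by (rule sum.swap)
  also have "\<dots> = (\<Sum>P\<in>Irr n. \<Sum>j<4. \<i> ^ (j * (4 - t + cl P)))"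
    by (simp only: chi_def power_add[symmetric] distrib_left)
  also have "\<dots> = (\<Sum>P\<in>Irr n. if cl P = t then 4 else 0)"
  proof (intro sum.cong refl)
    fix P
    have "4 dvd (4 - t + cl P) \<longleftrightarrow> cl P = t" using assms cl_le[of P] by presburger
    thus "(\<Sum>j<4. \<i> ^ (j * (4 - t + cl P))) = (if cl P = t then 4 else 0)"
      by (simp add: sum_i_pow)
  qed
  also have "\<dots> = of_nat (4 * card {P\<in>Irr n. cl P = t})"
    by (simp add: sum.If_cases finite_Irr Int_def)
  finally show ?thesis ..
qed

lemma icoeff_reflect:
  assumes "degree (f::bit poly) = n" "i \<in> {1,2}"
  shows "icoeff f (int n - int i) = coeff (reflect_poly f) i"
  using assms by (auto simp: icoeff_def coeff_reflect_poly nat_diff_distrib)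

lemma I2_eq:
  assumes "t \<le> 3"
  shows "I2 n (of_nat (t mod 2)) (of_nat (t div 2)) = card {P\<in>Irr n. cl P = t}"
proof -
  have "{f :: bit poly. degree f = n \<and> lead_coeff f = 1 \<and> irreducible f
      \<and> icoeff f (int n - 1) = of_nat (t mod 2) \<and> icoeff f (int n - 2) = of_nat (t div 2)}
      = {P\<in>Irr n. cl P = t}"
  proof (intro set_eqI iffI)
    fix f assume "f \<in> {f :: bit poly. degree f = n \<and> lead_coeff f = 1 \<and> irreducible f
      \<and> icoeff f (int n - 1) = of_nat (t mod 2) \<and> icoeff f (int n - 2) = of_nat (t div 2)}"
    hence f: "degree f = n" "irreducible f" "coeff (reflect_poly f) 1 = of_nat (t mod 2)"
        "coeff (reflect_poly f) 2 = of_nat (t div 2)"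
      using icoeff_reflect[of f n 1] icoeff_reflect[of f n 2] by auto
    have "t = 0 \<or> t = 1 \<or> t = 2 \<or> t = 3" using assms by auto
    hence "cl f = t" unfolding cl_def f(3,4)
      by (elim disjE) (simp_all add: bv_def)
    thus "f \<in> {P\<in>Irr n. cl P = t}" using f by (simp add: Irr_def)
  next
    fix f assume "f \<in> {P\<in>Irr n. cl P = t}"
    hence f: "degree f = n" "irreducible f" "cl f = t" by (auto simp: Irr_def)
    have "f \<noteq> 0" using f(2) by auto
    have "coeff (reflect_poly f) 1 = of_nat (t mod 2) \<and> coeff (reflect_poly f) 2 = of_nat (t div 2)"
      using f(3)[symmetric] unfolding cl_def
      by (cases "coeff (reflect_poly f) 1"; cases "coeff (reflect_poly f) 2") (simp_all add: bv_def)
    thus "f \<in> {f :: bit poly. degree f = n \<and> lead_coeff f = 1 \<and> irreducible f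
      \<and> icoeff f (int n - 1) = of_nat (t mod 2) \<and> icoeff f (int n - 2) = of_nat (t div 2)}"
      using f lead_coeff_bit[OF \<open>f \<noteq> 0\<close>] icoeff_reflect[of f n 1] icoeff_reflect[of f n 2] by simp
  qed
  thus ?thesis by (simp add: I2_def)
qed

lemma sqrt2_pow: "sqrt 2 ^ m = 2 powr (real m / 2)"
proof -
  have "sqrt 2 = 2 powr (1/2)" by (simp add: powr_half_sqrt)
  hence "sqrt 2 ^ m = 2 powr (real m * (1/2))" by (simp add: powr_power)
  thus ?thesis by simp
qed

lemma one_plus_i: "1 + \<i> = complex_of_real (sqrt 2) * cis (pi/4)"
  by (simp add: complex_eq_iff cos_45 sin_45)

lemma one_minus_i: "1 - \<i> = complex_of_real (sqrt 2) * cis (- (pi/4))"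
  by (simp add: complex_eq_iff cos_45 sin_45)

lemma cis_plus_cis_neg: "cis x + cis (- x) = complex_of_real (2 * cos x)"
  by (simp add: complex_eq_iff)

lemma cis_pair:
  "cis a * (1 + \<i>) ^ m + cis (- a) * (1 - \<i>) ^ m
     = complex_of_real (2 * sqrt 2 ^ m * cos (a + real m * pi / 4))"
proof -
  have "cis a * (1 + \<i>) ^ m = complex_of_real (sqrt 2 ^ m) * cis (a + real m * (pi/4))"
    by (simp add: one_plus_i power_mult_distrib DeMoivre cis_mult)
  moreover have "cis (- a) * (1 - \<i>) ^ m = complex_of_real (sqrt 2 ^ m) * cis (- (a + real m * (pi/4)))"
    by (simp add: one_minus_i power_mult_distrib DeMoivre cis_mult algebra_simps)
  ultimately have "cis a * (1 + \<i>) ^ m + cis (- a) * (1 - \<i>) ^ m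
      = complex_of_real (sqrt 2 ^ m) * (cis (a + real m * (pi/4)) + cis (- (a + real m * (pi/4))))"
    by (simp add: algebra_simps)
  also have "\<dots> = complex_of_real (2 * sqrt 2 ^ m * cos (a + real m * pi / 4))"
    by (simp only: cis_plus_cis_neg of_real_mult[symmetric]) (simp add: algebra_simps)
  finally show ?thesis .
qed

lemma u_cis:
  assumes "t \<le> 3"
  shows "\<i> ^ (4 - t) = cis (- (real t * pi / 2))"
    and "(\<i> ^ (4 - t)) ^ 3 = cis (real t * pi / 2)"
proof -
  have it: "\<i> ^ t = cis (real t * pi / 2)"
    using DeMoivre[of "pi/2" t] by (simp add: cis_pi_half)
  have "\<i> ^ (4 - t) * \<i> ^ t = 1" using assms by (simp add: power_add[symmetric] i_pow4)
  hence "\<i> ^ (4 - t) = inverse (\<i> ^ t)" by (simp add: field_simps)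
  thus u: "\<i> ^ (4 - t) = cis (- (real t * pi / 2))" by (simp add: it cis_inverse)
  have "(\<i> ^ (4 - t)) ^ 4 = 1" by (metis i_pow4 power_mult mult.commute power_one)
  moreover have "(\<i> ^ (4 - t)) ^ 3 * \<i> ^ (4 - t) = (\<i> ^ (4 - t)) ^ 4"
    using power_add[of "\<i> ^ (4 - t)" 3 1] by simp
  ultimately have "(\<i> ^ (4 - t)) ^ 3 * \<i> ^ (4 - t) = 1" by simp
  hence "(\<i> ^ (4 - t)) ^ 3 = inverse (\<i> ^ (4 - t))" by (simp add: field_simps)
  thus "(\<i> ^ (4 - t)) ^ 3 = cis (real t * pi / 2)" by (simp add: u cis_inverse)
qed

lemma psi_val:
  assumes "m \<ge> 1"
  shows "psi j m = (if 4 dvd j then 2 ^ m else - ((- (1 + \<i> ^ j)) ^ m))"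
proof (cases "4 dvd j")
  case True
  show ?thesis using psi_triv[OF True assms] True by (simp only: if_True)
next
  case False
  show ?thesis using psi_nontriv[OF False assms] False by (simp only: if_False)
qed

lemma psi_mod:
  assumes "m \<ge> 1"
  shows "psi j m = psi (j mod 4) m"
proof -
  have "4 dvd j \<longleftrightarrow> 4 dvd (j mod 4)" by presburger
  moreover have "\<i> ^ j = \<i> ^ (j mod 4)" by (rule i_pow_mod)
  ultimately show ?thesis by (simp only: psi_val[OF assms])
qed

lemma psi_0: "m \<ge> 1 \<Longrightarrow> psi 0 m = 2 ^ m"
  by (subst psi_val) simp_all

lemma psi_1: "m \<ge> 1 \<Longrightarrow> psi 1 m = - ((-1) ^ m * (1 + \<i>) ^ m)"
proof -
  assume m: "m \<ge> 1"
  have "\<not> 4 dvd (1::nat)" by simp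
  hence "psi 1 m = - ((- (1 + \<i>)) ^ m)" by (simp only: psi_val[OF m] if_False power_one_right)
  thus ?thesis by (simp only: power_minus[of "1 + \<i>"])
qed

lemma psi_2: "m \<ge> 1 \<Longrightarrow> psi 2 m = 0"
proof -
  assume m: "m \<ge> 1"
  have "\<not> 4 dvd (2::nat)" by simp
  hence "psi 2 m = - ((- (1 + \<i> ^ 2)) ^ m)" by (simp only: psi_val[OF m] if_False)
  also have "1 + \<i> ^ 2 = 0" by simp
  finally show ?thesis using m by simp
qed

lemma psi_3: "m \<ge> 1 \<Longrightarrow> psi 3 m = - ((-1) ^ m * (1 - \<i>) ^ m)"
proof -
  assume m: "m \<ge> 1"
  have "\<not> 4 dvd (3::nat)" by simp
  hence "psi 3 m = - ((- (1 + \<i> ^ 3)) ^ m)" by (simp only: psi_val[OF m] if_False)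
  also have "1 + \<i> ^ 3 = 1 - \<i>" by (simp add: i_cube)
  finally show ?thesis by (simp only: power_minus[of "1 - \<i>"])
qed

definition E :: "nat \<Rightarrow> nat \<Rightarrow> nat \<Rightarrow> complex" where
  "E t k m = (\<Sum>j<4. \<i> ^ (j * (4 - t)) * psi (j * k) m)"

lemma E_expand:
  "E t k m = psi 0 m + \<i> ^ (4 - t) * psi k m + (\<i> ^ (4 - t))^2 * psi (2*k) m
             + (\<i> ^ (4 - t))^3 * psi (3*k) m"
proof -
  have "{..<4::nat} = {0,1,2,3}" by auto
  thus ?thesis by (simp add: E_def power_mult[symmetric] mult.commute add.assoc)
qed
lemma E_val0:
  assumes "t \<le> 3" "m \<ge> 1" "k mod 4 = 0"
  shows "E t k m = of_real (if t = 0 then 4 * 2 ^ m else 0)"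
proof -
  have "(2*k) mod 4 = 0" "(3*k) mod 4 = 0" using assms(3) by presburger+
  hence p: "psi k m = 2 ^ m" "psi (2*k) m = 2 ^ m" "psi (3*k) m = 2 ^ m"
    using psi_mod[OF assms(2)] assms(3) psi_0[OF assms(2)] by metis+
  have "E t k m = 2 ^ m * (1 + \<i> ^ (4 - t) + (\<i> ^ (4 - t))^2 + (\<i> ^ (4 - t))^3)"
    unfolding E_expand p psi_0[OF assms(2)] by (simp add: algebra_simps)
  also have "(\<Sum>j<4. \<i> ^ (j * (4 - t))) = (\<Sum>j<4. (\<i> ^ (4 - t)) ^ j)"
    by (intro sum.cong refl) (simp add: power_mult[symmetric] mult.commute)
  hence "1 + \<i> ^ (4 - t) + (\<i> ^ (4 - t))^2 + (\<i> ^ (4 - t))^3 = (\<Sum>j<4. \<i> ^ (j * (4 - t)))"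
    by (simp only: sum4)
  also have "\<dots> = (if t = 0 then 4 else 0)"
  proof -
    have "4 dvd (4 - t) \<longleftrightarrow> t = 0" using assms(1) by presburger
    thus ?thesis by (simp add: sum_i_pow)
  qed
  finally show ?thesis by simp
qed

lemma E_val2:
  assumes "t \<le> 3" "m \<ge> 1" "k mod 4 = 2"
  shows "E t k m = of_real (if even t then 2 * 2 ^ m else 0)"
proof -
  have "(2*k) mod 4 = 0" "(3*k) mod 4 = 2" using assms(3) by presburger+
  hence p: "psi k m = 0" "psi (2*k) m = 2 ^ m" "psi (3*k) m = 0"
    using psi_mod[OF assms(2)] assms(3) psi_0[OF assms(2)] psi_2[OF assms(2)] by metis+
  have "E t k m = 2 ^ m * (1 + (\<i> ^ (4 - t))^2)"
    unfolding E_expand p psi_0[OF assms(2)] by (simp add: algebra_simps)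
  also have "1 + (\<i> ^ (4 - t))^2 = (if even t then 2 else 0)"
  proof -
    have "t = 0 \<or> t = 1 \<or> t = 2 \<or> t = 3" using assms(1) by auto
    moreover have "(\<i> ^ 4)^2 = 1" "(\<i> ^ 3)^2 = -1" "(\<i> ^ 2)^2 = 1" "(\<i> ^ 1)^2 = -1"
      by (simp_all add: i_cube i_pow4)
    ultimately show ?thesis by (elim disjE) simp_all
  qed
  finally show ?thesis by simp
qed

lemma E_val1:
  assumes "t \<le> 3" "m \<ge> 1" "k mod 4 = 1"
  shows "E t k m = of_real (2 ^ m - (-1) ^ m * (2 * sqrt 2 ^ m * cos (- (real t * pi / 2) + real m * pi / 4)))"
proof -
  have "(2*k) mod 4 = 2" "(3*k) mod 4 = 3" using assms(3) by presburger+
  hence p: "psi k m = - ((-1) ^ m * (1 + \<i>) ^ m)" "psi (2*k) m = 0" "psi (3*k) m = - ((-1) ^ m * (1 - \<i>) ^ m)"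
    using psi_mod[OF assms(2)] assms(3) psi_1[OF assms(2)] psi_2[OF assms(2)] psi_3[OF assms(2)] by metis+
  have "E t k m = 2 ^ m - (-1) ^ m * (\<i> ^ (4 - t) * (1 + \<i>) ^ m + (\<i> ^ (4 - t))^3 * (1 - \<i>) ^ m)"
    unfolding E_expand p psi_0[OF assms(2)] by (simp add: algebra_simps)
  also have "\<i> ^ (4 - t) * (1 + \<i>) ^ m + (\<i> ^ (4 - t))^3 * (1 - \<i>) ^ m
      = complex_of_real (2 * sqrt 2 ^ m * cos (- (real t * pi / 2) + real m * pi / 4))"
    using cis_pair[of "- (real t * pi / 2)" m]
    by (subst u_cis(2)[OF assms(1)], subst u_cis(1)[OF assms(1)]) simp
  finally show ?thesis by simp
qed

lemma E_val3:
  assumes "t \<le> 3" "m \<ge> 1" "k mod 4 = 3"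
  shows "E t k m = of_real (2 ^ m - (-1) ^ m * (2 * sqrt 2 ^ m * cos (real t * pi / 2 + real m * pi / 4)))"
proof -
  have "(2*k) mod 4 = 2" "(3*k) mod 4 = 1" using assms(3) by presburger+
  hence p: "psi k m = - ((-1) ^ m * (1 - \<i>) ^ m)" "psi (2*k) m = 0" "psi (3*k) m = - ((-1) ^ m * (1 + \<i>) ^ m)"
    using psi_mod[OF assms(2)] assms(3) psi_1[OF assms(2)] psi_2[OF assms(2)] psi_3[OF assms(2)] by metis+
  have "E t k m = 2 ^ m - (-1) ^ m * ((\<i> ^ (4 - t))^3 * (1 + \<i>) ^ m + \<i> ^ (4 - t) * (1 - \<i>) ^ m)"
    unfolding E_expand p psi_0[OF assms(2)] by (simp add: algebra_simps)
  also have "(\<i> ^ (4 - t))^3 * (1 + \<i>) ^ m + \<i> ^ (4 - t) * (1 - \<i>) ^ m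
      = complex_of_real (2 * sqrt 2 ^ m * cos (real t * pi / 2 + real m * pi / 4))"
    using cis_pair[of "real t * pi / 2" m]
    by (subst u_cis(2)[OF assms(1)], subst u_cis(1)[OF assms(1)]) simp
  finally show ?thesis by simp
qed

definition R :: "nat \<Rightarrow> nat \<Rightarrow> nat \<Rightarrow> real" where
  "R n t k = iv (t = 0) * (iv (4 dvd k) * 2 ^ (n div k))
   + iv (2 dvd t) * (iv ((4::int) dvd (int k - 2)) * 2 powr (real (n div k) - 1))
   + iv ((4::int) dvd (int k - 1)) *
        (2 powr (real (n div k) - 2) - (-1) ^ (n div k) * 2 powr (real n / (2 * real k) - 1)
           * cos ((real (n div k) - 2 * real t) / 4 * pi))
   + iv ((4::int) dvd (int k + 1)) *
        (2 powr (real (n div k) - 2) - (-1) ^ (n div k) * 2 powr (real n / (2 * real k) - 1)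
           * cos ((real (n div k) + 2 * real t) / 4 * pi))"

lemma powr_m1: "2 powr (real m - 1) = (2::real) ^ m / 2"
  by (simp add: powr_diff powr_realpow)

lemma powr_m2: "2 powr (real m - 2) = (2::real) ^ m / 4"
  by (simp add: powr_diff powr_realpow)

lemma E_R:
  assumes "n \<ge> 1" "k dvd n" "t \<le> 3"
  shows "E t k (n div k) = of_real (4 * R n t k)"
proof -
  define m where "m = n div k"
  have k0: "k > 0" using assms by (auto intro: Nat.gr0I)
  have m1: "m \<ge> 1" unfolding m_def using assms k0
    by (metis One_nat_def Suc_leI div_greater_zero_iff dvd_imp_le not_one_le_zero neq0_conv)
  have nk: "real n = real k * real m" unfolding m_def using assms(2) by (simp add: of_nat_mult[symmetric])
  have half: "2 powr (real n / (2 * real k) - 1) = sqrt 2 ^ m / 2"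
  proof -
    have "real n / (2 * real k) = real m / 2" using nk k0 by (simp add: field_simps)
    hence "2 powr (real n / (2 * real k) - 1) = 2 powr (real m / 2 - 1)" by (simp only:)
    also have "\<dots> = sqrt 2 ^ m / 2" by (simp add: powr_diff sqrt2_pow)
    finally show ?thesis .
  qed
  have "k mod 4 = 0 \<or> k mod 4 = 1 \<or> k mod 4 = 2 \<or> k mod 4 = 3" by presburger
  moreover {
    assume r: "k mod 4 = 0"
    have c: "4 dvd k" "\<not> (4::int) dvd (int k - 2)" "\<not> (4::int) dvd (int k - 1)" "\<not> (4::int) dvd (int k + 1)"
      using r by presburger+
    have "R n t k = iv (t = 0) * 2 ^ m" unfolding R_def m_def[symmetric] using c by (simp add: iv_def)
    hence "4 * R n t k = (if t = 0 then 4 * 2 ^ m else 0)" by (simp add: iv_def)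
    hence ?thesis unfolding m_def[symmetric] E_val0[OF assms(3) m1 r] by simp
  }
  moreover {
    assume r: "k mod 4 = 2"
    have c: "\<not> 4 dvd k" "(4::int) dvd (int k - 2)" "\<not> (4::int) dvd (int k - 1)" "\<not> (4::int) dvd (int k + 1)"
      using r by presburger+
    have "R n t k = iv (2 dvd t) * (2 ^ m / 2)" unfolding R_def m_def[symmetric] using c by (simp add: iv_def powr_m1)
    hence "4 * R n t k = (if even t then 2 * 2 ^ m else 0)" by (cases "even t") (simp_all add: iv_def)
    hence ?thesis unfolding m_def[symmetric] E_val2[OF assms(3) m1 r] by simp
  }
  moreover {
    assume r: "k mod 4 = 1"
    have c: "\<not> 4 dvd k" "\<not> (4::int) dvd (int k - 2)" "(4::int) dvd (int k - 1)" "\<not> (4::int) dvd (int k + 1)"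
      using r by presburger+
    have arg: "(real m - 2 * real t) / 4 * pi = - (real t * pi / 2) + real m * pi / 4"
      by (simp add: field_simps)
    have "R n t k = 2 ^ m / 4 - (-1) ^ m * (sqrt 2 ^ m / 2) * cos (- (real t * pi / 2) + real m * pi / 4)"
      unfolding R_def m_def[symmetric] arg using c by (simp add: iv_def powr_m2 half)
    hence "4 * R n t k = 2 ^ m - (-1) ^ m * (2 * sqrt 2 ^ m * cos (- (real t * pi / 2) + real m * pi / 4))"
      by (simp add: algebra_simps)
    hence ?thesis unfolding m_def[symmetric] E_val1[OF assms(3) m1 r] by simp
  }
  moreover {
    assume r: "k mod 4 = 3"
    have c: "\<not> 4 dvd k" "\<not> (4::int) dvd (int k - 2)" "\<not> (4::int) dvd (int k - 1)" "(4::int) dvd (int k + 1)"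
      using r by presburger+
    have arg: "(real m + 2 * real t) / 4 * pi = real t * pi / 2 + real m * pi / 4"
      by (simp add: field_simps)
    have "R n t k = 2 ^ m / 4 - (-1) ^ m * (sqrt 2 ^ m / 2) * cos (real t * pi / 2 + real m * pi / 4)"
      unfolding R_def m_def[symmetric] arg using c by (simp add: iv_def powr_m2 half)
    hence "4 * R n t k = 2 ^ m - (-1) ^ m * (2 * sqrt 2 ^ m * cos (real t * pi / 2 + real m * pi / 4))"
      by (simp add: algebra_simps)
    hence ?thesis unfolding m_def[symmetric] E_val3[OF assms(3) m1 r] by simp
  }
  ultimately show ?thesis by metis
qed

theorem proposition2:
  fixes n t :: nat
  assumes "n \<ge> 1" and "t \<le> 3"
  shows "real (I2 n (of_nat (t mod 2)) (of_nat (t div 2))) =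
     iv (t = 0) / real n * (\<Sum>k | k dvd n. iv (4 dvd k) * real_of_int (moebius k) * 2 ^ (n div k))
   + iv (2 dvd t) / real n * (\<Sum>k | k dvd n. iv ((4::int) dvd (int k - 2)) * real_of_int (moebius k) * 2 powr (real (n div k) - 1))
   + 1 / real n * (\<Sum>k | k dvd n. iv ((4::int) dvd (int k - 1)) * real_of_int (moebius k) *
        (2 powr (real (n div k) - 2) - (-1) ^ (n div k) * 2 powr (real n / (2 * real k) - 1)
           * cos ((real (n div k) - 2 * real t) / 4 * pi)))
   + 1 / real n * (\<Sum>k | k dvd n. iv ((4::int) dvd (int k + 1)) * real_of_int (moebius k) *
        (2 powr (real (n div k) - 2) - (-1) ^ (n div k) * 2 powr (real n / (2 * real k) - 1)
           * cos ((real (n div k) + 2 * real t) / 4 * pi)))"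
proof -
  define D where "D = {k. k dvd n}"
  have fD: "finite D" using assms(1) by (simp add: D_def)
  define N where "N = card {P\<in>Irr n. cl P = t}"
  have I: "I2 n (of_nat (t mod 2)) (of_nat (t div 2)) = N" unfolding N_def by (rule I2_eq[OF assms(2)])
  have "complex_of_real (real n * (4 * real N)) = of_nat n * of_nat (4 * N)" by simp
  also have "\<dots> = of_nat n * (\<Sum>j<4. \<i> ^ (j * (4 - t)) * G j n)"
    unfolding N_def by (simp only: orth[OF assms(2)])
  also have "\<dots> = (\<Sum>j<4. \<i> ^ (j * (4 - t)) * (of_nat n * G j n))"
    by (simp add: sum_distrib_left mult_ac)
  also have "\<dots> = (\<Sum>j<4. \<i> ^ (j * (4 - t)) * (\<Sum>k\<in>D. of_int (moebius k) * psi (j*k) (n div k)))"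
    unfolding D_def by (simp only: inversion[OF assms(1)])
  also have "\<dots> = (\<Sum>j<4. \<Sum>k\<in>D. \<i> ^ (j * (4 - t)) * (of_int (moebius k) * psi (j*k) (n div k)))"
    by (simp only: sum_distrib_left)
  also have "\<dots> = (\<Sum>k\<in>D. \<Sum>j<4. \<i> ^ (j * (4 - t)) * (of_int (moebius k) * psi (j*k) (n div k)))"
    by (rule sum.swap)
  also have "\<dots> = (\<Sum>k\<in>D. of_int (moebius k) * E t k (n div k))"
    by (simp add: E_def sum_distrib_left mult_ac)
  also have "\<dots> = (\<Sum>k\<in>D. complex_of_real (4 * (real_of_int (moebius k) * R n t k)))"
  proof (intro sum.cong refl)
    fix k assume "k \<in> D"
    hence "E t k (n div k) = of_real (4 * R n t k)" using E_R[OF assms(1) _ assms(2)] by (simp add: D_def)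
    thus "of_int (moebius k) * E t k (n div k) = complex_of_real (4 * (real_of_int (moebius k) * R n t k))"
      by simp
  qed
  also have "\<dots> = complex_of_real (4 * (\<Sum>k\<in>D. real_of_int (moebius k) * R n t k))"
    by (simp add: sum_distrib_left)
  finally have "real n * (4 * real N) = 4 * (\<Sum>k\<in>D. real_of_int (moebius k) * R n t k)"
    by (simp only: of_real_eq_iff)
  hence main: "real N = 1 / real n * (\<Sum>k\<in>D. real_of_int (moebius k) * R n t k)"
    using assms(1) by (simp add: field_simps)
  have "(\<Sum>k\<in>D. real_of_int (moebius k) * R n t k) =
      iv (t = 0) * (\<Sum>k\<in>D. iv (4 dvd k) * real_of_int (moebius k) * 2 ^ (n div k))
    + iv (2 dvd t) * (\<Sum>k\<in>D. iv ((4::int) dvd (int k - 2)) * real_of_int (moebius k) * 2 powr (real (n div k) - 1))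
    + (\<Sum>k\<in>D. iv ((4::int) dvd (int k - 1)) * real_of_int (moebius k) *
        (2 powr (real (n div k) - 2) - (-1) ^ (n div k) * 2 powr (real n / (2 * real k) - 1)
           * cos ((real (n div k) - 2 * real t) / 4 * pi)))
    + (\<Sum>k\<in>D. iv ((4::int) dvd (int k + 1)) * real_of_int (moebius k) *
        (2 powr (real (n div k) - 2) - (-1) ^ (n div k) * 2 powr (real n / (2 * real k) - 1)
           * cos ((real (n div k) + 2 * real t) / 4 * pi)))"
  proof -
    define A where "A = (\<lambda>k. iv (4 dvd k) * real_of_int (moebius k) * 2 ^ (n div k))"
    define B where "B = (\<lambda>k. iv ((4::int) dvd (int k - 2)) * real_of_int (moebius k) * 2 powr (real (n div k) - 1))"
    define C where "C = (\<lambda>k. iv ((4::int) dvd (int k - 1)) * real_of_int (moebius k) *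
        (2 powr (real (n div k) - 2) - (-1) ^ (n div k) * 2 powr (real n / (2 * real k) - 1)
           * cos ((real (n div k) - 2 * real t) / 4 * pi)))"
    define C' where "C' = (\<lambda>k. iv ((4::int) dvd (int k + 1)) * real_of_int (moebius k) *
        (2 powr (real (n div k) - 2) - (-1) ^ (n div k) * 2 powr (real n / (2 * real k) - 1)
           * cos ((real (n div k) + 2 * real t) / 4 * pi)))"
    have "(\<Sum>k\<in>D. real_of_int (moebius k) * R n t k) = (\<Sum>k\<in>D. iv (t = 0) * A k + iv (2 dvd t) * B k + C k + C' k)"
      by (intro sum.cong refl) (simp add: R_def A_def B_def C_def C'_def algebra_simps)
    also have "\<dots> = iv (t = 0) * sum A D + iv (2 dvd t) * sum B D + sum C D + sum C' D"
      by (simp add: sum.distrib sum_distrib_left)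
    finally show ?thesis by (simp only: A_def B_def C_def C'_def)
  qed
  thus ?thesis using main I unfolding D_def by (simp add: algebra_simps add_divide_distrib)
qed

end
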